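(* Consider online multiclass classification with an arbitrary feedback graph $\mathcal{G}=([K],\mathcal{E})$, and suppose that for every round $t$ the loss $\ell_t=\ell(\cdot,\mathbf{x}_t,y_t)$ is a regular surrogate loss with respect to $\ell$. Run Gappletron on $\mathcal{G}$ (with any $\gamma\ge 0$ and any OCO algorithm $\mathcal{A}$) with a gap map $a:\mathbb{R}^{K\times d}\times\mathbb{R}^d\to[0,1]$ satisfying $a(\mathbf{W}_t,\mathbf{x}_t)=\ell(\mathbf{W}_t,\mathbf{x}_t,y_t^\star)$ for all $t$. Then for every round $t$, $$\sum_{y\in[K]} p_t'(y)\,\mathbb{1}[y\neq y_t]\;\le\;\frac{K-1}{K}\,\ell_t(\mathbf{W}_t)+\gamma_t .$$
   Context: Setting: for $t=1,\dots,T$ an oblivious adversary fixes $\mathbf{x}_t\in\mathbb{R}^d$ and $y_t\in[K]=\{1,\dots,K\}$; the learner sees $\mathbf{x}_t$ and predicts $y_t'\in[K]$. A feedback graph is a directed graph $\mathcal{G}=([K],\mathcal{E})$ in which every node has at least one incoming edge (self-loops allowed); $\mathrm{out}(y')=\{y:(y',y)\in\mathcal{E}\}$. After predicting $y_t'$ the learner observes the pairs $(y,\mathbb{1}[y\ne y_t])$ for $y\in\mathrm{out}(y_t')$ (so $y_t$ is learned iff $y_t\in\mathrm{out}(y_t')$); if a node has $K-1$ outgoing edges the missing edge is added. $\mathcal{Q}=\{y':\mathrm{out}(y')=[K]\}$ is the (possibly empty) set of revealing actions. A dominating set is $S\subseteq[K]$ such that every $y\in[K]$ lies in $\mathrm{out}(y')$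 for some $y'\in S$; $\rho$ is the minimum size of a dominating set and $S$ denotes a minimum dominating set. $\mathbf{1}$ is the all-ones vector, $\mathbf{1}_S$ the indicator vector of $S$, $\mathbf{e}_k$ the $k$-th basis vector of $\mathbb{R}^K$. $P_t,\mathbb{E}_t$ denote probability/expectation conditional on past predictions and feedback. Predictors $\mathbf{W}\in\mathcal{W}\subseteq\mathbb{R}^{K\times d}$ ($\mathcal{W}$ convex) with rows $\mathbf{W}^1,\dots,\mathbf{W}^K$, identified with vectors in $\mathbb{R}^{Kd}$; $\|\cdot\|$ is a fixed norm on $\mathbb{R}^{Kd}$. Let $\ell:\mathcal{W}\times\mathbb{R}^d\times[K]\to\mathbb{R}_+$ be convex in $\mathbf{W}$ and such that for all $\mathbf{W}\in\mathcal{W}$, $\mathbf{x}\in\mathbb{R}^d$ and all $y\ne y^\star:=\arg\max_k\langle \mathbf{W}^k,\mathbf{x}\rangle$: $\frac{K-1}{K}\ell(\mathbf{W},\mathbf{x},y)+\frac1K\ell(\mathbf{W},\mathbf{x},y^\star)\ge 1$. Then $\ell_t=\ell(\cdot,\mathbf{x}_t,y_t)$ is a regular surrogate loss (with constant $L>0$) if $\|\nabla\ell_t(\mathbf{W})\|^2\le 2L\,\ell_t(\mathbf{W})$ for all $\mathbf{W}\in\mathcal{W}$. Gappletron (inputs: $\mathcal{Q}$, $S$, an online convex optimization algorithm $\mathcal{A}$ on $\mathcal{W}$, $\gamma\ge0$, gap map $a$): $\mathbf{W}_1$ is output by $\mathcal{A}$. At round $t$: $y_t^\star=\arg\max_k\langle\mathbf{W}_t^k,\mathbf{x}_t\rangle$;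 $\gamma_t=0$ if $y_t^\star\in\mathcal{Q}$, else $\gamma_t=\min\{\tfrac12,\gamma/\sqrt{|\{s\le t:y_s^\star\notin\mathcal{Q}\}|}\}$; $a_t=a(\mathbf{W}_t,\mathbf{x}_t)$; $\zeta_t=\mathbb{1}[\gamma_t\le a_t]$; $\mathbf{p}_t'=(1-\zeta_t a_t-(1-\zeta_t)\gamma_t)\mathbf{e}_{y_t^\star}+\zeta_t a_t\frac1K\mathbf{1}+(1-\zeta_t)\frac{\gamma_t}{\rho}\mathbf{1}_S$; predict $y_t'\sim\mathbf{p}_t'$; set $v_t=\mathbb{1}[y_t\in\mathrm{out}(y_t')]/P_t(y_t\in\mathrm{out}(y_t'))$ and $\widehat\ell_t(\mathbf{W})=v_t\ell_t(\mathbf{W})$; feed $\widehat\ell_t$ to $\mathcal{A}$ and receive $\mathbf{W}_{t+1}$. *)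

theory Defs
  imports "HOL-Analysis.Analysis"
begin

text \<open>Labels are the elements of a finite type 'k (so K = CARD('k)); a predictor
 W is a K x d real matrix  real^'d^'k  whose k-th row is  W $ k.\<close>

definition feedback_graph :: "('k::finite \<times> 'k) set \<Rightarrow> bool" where
  "feedback_graph E \<longleftrightarrow> (\<forall>y. \<exists>y'. (y', y) \<in> E)"

definition out0 :: "('k::finite \<times> 'k) set \<Rightarrow> 'k \<Rightarrow> 'k set" where
  "out0 E y' = {y. (y', y) \<in> E}"

text \<open>Out-neighbourhood after the convention: a node with K-1 outgoing edges gets the missing one.\<close>
definition out :: "('k::finite \<times> 'k) set \<Rightarrow> 'k \<Rightarrow> 'k set" where
  "out E y' = (if card (out0 E y') = CARD('k) - 1 then UNIV else out0 E y')"

definition revealing :: "('k::finite \<times> 'k) set \<Rightarrow> 'k set" where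
  "revealing E = {y'. out E y' = UNIV}"

definition dominating :: "('k::finite \<times> 'k) set \<Rightarrow> 'k set \<Rightarrow> bool" where
  "dominating E S \<longleftrightarrow> (\<forall>y. \<exists>y'\<in>S. y \<in> out E y')"

definition min_dominating :: "('k::finite \<times> 'k) set \<Rightarrow> 'k set \<Rightarrow> bool" where
  "min_dominating E S \<longleftrightarrow> dominating E S \<and> (\<forall>S'. dominating E S' \<longrightarrow> card S \<le> card S')"

definition is_norm :: "('a::real_vector \<Rightarrow> real) \<Rightarrow> bool" where
  "is_norm N \<longleftrightarrow> (\<forall>v. 0 \<le> N v) \<and> (\<forall>v. N v = 0 \<longleftrightarrow> v = 0)
     \<and> (\<forall>c v. N (c *\<^sub>R v) = \<bar>c\<bar> * N v) \<and> (\<forall>u v. N (u + v) \<le> N u + N v)"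

definition regular_surrogate ::
  "('a::real_inner \<Rightarrow> real) \<Rightarrow> real \<Rightarrow> 'a set \<Rightarrow> ('a \<Rightarrow> real) \<Rightarrow> bool" where
  "regular_surrogate N L Wset f \<longleftrightarrow> L > 0 \<and>
     (\<forall>W\<in>Wset. \<exists>g. (f has_derivative (\<lambda>h. g \<bullet> h)) (at W within Wset)
                   \<and> (N g)\<^sup>2 \<le> 2 * L * f W)"

text \<open>gamma_t of Gappletron, rounds t = 1,2,...; ystar s is the argmax label at round s.\<close>
definition gamma_round :: "'k set \<Rightarrow> (nat \<Rightarrow> 'k) \<Rightarrow> real \<Rightarrow> nat \<Rightarrow> real" where
  "gamma_round Q ystar gam t =
     (if ystar t \<in> Q then 0
      else min (1/2) (gam / sqrt (real (card {s \<in> {1..t}. ystar s \<notin> Q}))))"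

definition gap_dist :: "'k::finite set \<Rightarrow> 'k \<Rightarrow> real \<Rightarrow> real \<Rightarrow> 'k \<Rightarrow> real" where
  "gap_dist S yst a g y =
     (let z = (if g \<le> a then 1 else 0 :: real) in
        (1 - z * a - (1 - z) * g) * (if y = yst then 1 else 0)
        + z * a * (1 / real CARD('k))
        + (1 - z) * (g / real (card S)) * (if y \<in> S then 1 else 0))"

end

theory Submission
  imports Defs
begin

theorem lemma1:
  fixes E :: "('k::finite \<times> 'k) set"
    and S :: "'k set"
    and Wset :: "(real^'d^'k) set"
    and loss :: "real^'d^'k \<Rightarrow> real^'d \<Rightarrow> 'k \<Rightarrow> real"
    and am :: "real^'d^'k \<Rightarrow> real^'d \<Rightarrow> 'k"
    and N :: "real^'d^'k \<Rightarrow> real"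
    and L gam :: real
    and agap :: "real^'d^'k \<Rightarrow> real^'d \<Rightarrow> real"
    and W :: "nat \<Rightarrow> real^'d^'k"
    and x :: "nat \<Rightarrow> real^'d"
    and y :: "nat \<Rightarrow> 'k"
    and t :: nat
  assumes graph: "feedback_graph E"
    and domS: "min_dominating E S"
    and convW: "convex Wset"
    and normN: "is_norm N"
    and argmax: "\<And>V v k. V $ k \<bullet> v \<le> V $ (am V v) \<bullet> v"
    and loss_nonneg: "\<And>V v k. V \<in> Wset \<Longrightarrow> 0 \<le> loss V v k"
    and loss_convex: "\<And>v k. convex_on Wset (\<lambda>V. loss V v k)"
    and loss_cond: "\<And>V v k. V \<in> Wset \<Longrightarrow> k \<noteq> am V v \<Longrightarrow>
        (real CARD('k) - 1) / real CARD('k) * loss V v k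
          + 1 / real CARD('k) * loss V v (am V v) \<ge> 1"
    and regular: "\<And>s. s \<ge> 1 \<Longrightarrow> regular_surrogate N L Wset (\<lambda>V. loss V (x s) (y s))"
    and gam_nonneg: "gam \<ge> 0"
    and agap_range: "\<And>V v. 0 \<le> agap V v \<and> agap V v \<le> 1"
    and agap_loss: "\<And>s. s \<ge> 1 \<Longrightarrow> agap (W s) (x s) = loss (W s) (x s) (am (W s) (x s))"
    and W_in: "\<And>s. s \<ge> 1 \<Longrightarrow> W s \<in> Wset"
    and t_pos: "t \<ge> 1"
  shows "(\<Sum>k\<in>UNIV. gap_dist S (am (W t) (x t)) (agap (W t) (x t))
              (gamma_round (revealing E) (\<lambda>s. am (W s) (x s)) gam t) k
            * (if k \<noteq> y t then 1 else 0))
         \<le> (real CARD('k) - 1) / real CARD('k) * loss (W t) (x t) (y t)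
            + gamma_round (revealing E) (\<lambda>s. am (W s) (x s)) gam t"
proof -
  define ys where "ys = am (W t) (x t)"
  define a where "a = agap (W t) (x t)"
  define g where "g = gamma_round (revealing E) (\<lambda>s. am (W s) (x s)) gam t"
  define K where "K = real CARD('k)"
  define yt where "yt = y t"
  define P where "P = gap_dist S ys a g"
  have K1: "K \<ge> 1" unfolding K_def by (simp add: Suc_le_eq)
  have g0: "g \<ge> 0" unfolding g_def gamma_round_def using gam_nonneg by auto
  have a01: "0 \<le> a" "a \<le> 1" unfolding a_def using agap_range by auto
  have aL: "a = loss (W t) (x t) ys" unfolding a_def ys_def using agap_loss t_pos by auto
  have Wt: "W t \<in> Wset" using W_in t_pos by auto
  have lc: "yt \<noteq> ys \<Longrightarrow> (K - 1) / K * loss (W t) (x t) yt + a / K \<ge> 1"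
    using loss_cond[OF Wt, of yt "x t"] aL unfolding K_def ys_def by auto
  have lnn: "0 \<le> loss (W t) (x t) yt" using loss_nonneg Wt by auto
  have Sne: "S \<noteq> {}" using domS unfolding min_dominating_def dominating_def by blast
  have cS: "real (card S) > 0" using Sne by (simp add: card_gt_0_iff)
  have sum_ind: "(\<Sum>k\<in>UNIV. (if k \<in> S then 1 else 0 :: real)) = real (card S)"
    by (simp add: sum.If_cases)
  have sum_eq: "(\<Sum>k\<in>UNIV. (if k = ys then 1 else 0 :: real)) = 1"
    by simp
  have sum_c: "\<And>c. (\<Sum>k\<in>UNIV. c * (if k = ys then 1 else 0 :: real)) = c"
    by (simp add: sum_distrib_left[symmetric])
  have totP: "(\<Sum>k\<in>UNIV. P k) = 1"
  proof -
    have "(\<Sum>k\<in>UNIV. P k) = (1 - (if g \<le> a then 1 else 0) * a - (1 - (if g \<le> a then 1 else 0)) * g) * (\<Sum>k\<in>UNIV. (if k = ys then 1 else 0 :: real))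
       + K * ((if g \<le> a then 1 else 0) * a * (1 / K))
       + (1 - (if g \<le> a then 1 else 0)) * (g / real (card S)) * (\<Sum>k\<in>UNIV. (if k \<in> S then 1 else 0 :: real))"
      unfolding P_def gap_dist_def Let_def K_def
      by (simp add: sum.distrib sum_distrib_left sum_c del: sum_eq)
    also have "\<dots> = 1" using K1 cS unfolding sum_ind sum_eq by (auto simp: field_simps)
    finally show ?thesis .
  qed
  have split: "(\<Sum>k\<in>UNIV. P k * (if k \<noteq> yt then 1 else 0)) = (\<Sum>k\<in>UNIV. P k) - P yt"
  proof -
    have "(\<Sum>k\<in>UNIV. P k) = P yt + (\<Sum>k\<in>UNIV - {yt}. P k)" by (simp add: sum.remove)
    moreover have "(\<Sum>k\<in>UNIV. P k * (if k \<noteq> yt then 1 else 0)) = (\<Sum>k\<in>UNIV - {yt}. P k)"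
    proof -
      have "(\<Sum>k\<in>UNIV. P k * (if k \<noteq> yt then 1 else 0)) = (\<Sum>k\<in>UNIV. if k \<noteq> yt then P k else 0)"
        by (rule sum.cong) auto
      also have "\<dots> = (\<Sum>k\<in>{k\<in>UNIV. k \<noteq> yt}. P k)" using sum.inter_filter[of UNIV P "\<lambda>k. k \<noteq> yt"] by simp
      also have "{k\<in>UNIV. k \<noteq> yt} = UNIV - {yt}" by auto
      finally show ?thesis .
    qed
    ultimately show ?thesis by simp
  qed
  have main: "1 - P yt \<le> (K - 1) / K * loss (W t) (x t) yt + g"
  proof (cases "g \<le> a")
    case True
    then have Pyt: "P yt = (1 - a) * (if yt = ys then 1 else 0) + a / K"
      unfolding P_def gap_dist_def K_def by simp
    show ?thesis
    proof (cases "yt = ys")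
      case True
      then have "1 - P yt = (K - 1) / K * a" using Pyt K1 by (simp add: field_simps)
      then show ?thesis using True aL g0 by simp
    next
      case False
      then show ?thesis using Pyt lc g0 by simp
    qed
  next
    case False
    then have Pyt: "P yt = (1 - g) * (if yt = ys then 1 else 0) + g / real (card S) * (if yt \<in> S then 1 else 0)"
      unfolding P_def gap_dist_def by simp
    have "0 \<le> (K - 1) / K * loss (W t) (x t) yt" using K1 lnn by simp
    moreover have "g / real (card S) * (if yt \<in> S then 1 else 0) \<ge> 0" using g0 cS by simp
    moreover have "yt \<noteq> ys \<Longrightarrow> 1 \<le> (K - 1) / K * loss (W t) (x t) yt + g"
    proof -
      assume h: "yt \<noteq> ys"
      have "a / K \<le> a" using K1 a01 mult_left_mono[of 1 K a] by (simp add: divide_le_eq)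
      then show ?thesis using lc[OF h] False by simp
    qed
    ultimately show ?thesis using Pyt by (cases "yt = ys") auto
  qed
  show ?thesis
    using split totP main unfolding P_def ys_def a_def g_def K_def yt_def by simp
qed

end
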